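(* Let $G=(V,E)$ be a finite graph with adjacency matrix $A$, and let $\eta:V\to\mathbb Z$ be a labeling. Let $\ell$ and $b$ be the numbers of level and bad vertices respectively. For $j\in\mathbb Z$ let $L_j$ be the set of level vertices with label $j$. If $\lambda$ is an eigenvalue of $A$ of multiplicity $m$, and $\ell_j$ denotes the multiplicity of $\lambda$ as an eigenvalue of the adjacency matrix of the subgraph induced by $L_j$ (with $\ell_j=0$ if it is not an eigenvalue), then $$m\le b+\sum_j\ell_j.$$ Consequently, for the multiplicities $m_1,\dots,m_k$ of any $k$ distinct eigenvalues of $A$, $m_1+\dots+m_k\le kb+\ell$.
   Context: Given a graph $G=(V,E)$ and a labeling $\eta:V\to\mathbb Z$, a vertex $v$ is called: (i) prodigy if it has a neighbour $w$ with $\eta(w)<\eta(v)$ such that all other neighbours of $w$ (other than $v$) have label less than $\eta(v)$; (ii) level if it is not prodigy and all of its neighbours have label $\le\eta(v)$; (iii) bad if it is neither prodigy nor level. *)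

theory Defs
  imports "Jordan_Normal_Form.Char_Poly"
begin

text \<open>A finite simple graph on the vertex set {0..<n}, given by an edge relation E
  (assumed symmetric and irreflexive in the theorem); a labeling eta of vertices by integers.\<close>

definition adj_mat :: "nat \<Rightarrow> (nat \<Rightarrow> nat \<Rightarrow> bool) \<Rightarrow> real mat" where
  "adj_mat n E = mat n n (\<lambda>(i, j). if E i j then 1 else 0)"

definition induced_adj_mat :: "(nat \<Rightarrow> nat \<Rightarrow> bool) \<Rightarrow> nat set \<Rightarrow> real mat" where
  "induced_adj_mat E S = (let s = sorted_list_of_set S in
     mat (length s) (length s) (\<lambda>(i, j). if E (s ! i) (s ! j) then 1 else 0))"

text \<open>Multiplicity of lambda as an eigenvalue (multiplicity as a root of the
  characteristic polynomial; 0 if lambda is not an eigenvalue).\<close>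
definition eig_mult :: "real mat \<Rightarrow> real \<Rightarrow> nat" where
  "eig_mult A lam = order lam (char_poly A)"

definition prodigy :: "nat \<Rightarrow> (nat \<Rightarrow> nat \<Rightarrow> bool) \<Rightarrow> (nat \<Rightarrow> int) \<Rightarrow> nat \<Rightarrow> bool" where
  "prodigy n E eta v \<longleftrightarrow> (\<exists>w<n. E v w \<and> eta w < eta v \<and>
      (\<forall>u<n. E w u \<and> u \<noteq> v \<longrightarrow> eta u < eta v))"

definition level :: "nat \<Rightarrow> (nat \<Rightarrow> nat \<Rightarrow> bool) \<Rightarrow> (nat \<Rightarrow> int) \<Rightarrow> nat \<Rightarrow> bool" where
  "level n E eta v \<longleftrightarrow> \<not> prodigy n E eta v \<and> (\<forall>w<n. E v w \<longrightarrow> eta w \<le> eta v)"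

definition bad :: "nat \<Rightarrow> (nat \<Rightarrow> nat \<Rightarrow> bool) \<Rightarrow> (nat \<Rightarrow> int) \<Rightarrow> nat \<Rightarrow> bool" where
  "bad n E eta v \<longleftrightarrow> \<not> prodigy n E eta v \<and> \<not> level n E eta v"

definition level_class :: "nat \<Rightarrow> (nat \<Rightarrow> nat \<Rightarrow> bool) \<Rightarrow> (nat \<Rightarrow> int) \<Rightarrow> int \<Rightarrow> nat set" where
  "level_class n E eta j = {v. v < n \<and> level n E eta v \<and> eta v = j}"

end

theory Submission
  imports Defs "Jordan_Normal_Form.Jordan_Normal_Form_Uniqueness" "Jordan_Normal_Form.Jordan_Normal_Form_Existence" "Jordan_Normal_Form.DL_Rank"
begin


lemma DL:
  fixes C :: "real mat"
  assumes C: "C \<in> carrier_mat r n" and ps: "set ps \<subseteq> carrier_vec n"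
  and sep: "\<And>x. x \<in> carrier_vec n \<Longrightarrow> C *\<^sub>v x = 0\<^sub>v r \<Longrightarrow> (\<forall>p\<in>set ps. p \<bullet> x = 0) \<Longrightarrow> x = 0\<^sub>v n"
  shows "kernel_dim C \<le> length ps"
proof -
  define N where "N = length ps"
  define P where "P = mat_of_rows n ps"
  have P: "P \<in> carrier_mat N n" unfolding P_def N_def by simp
  interpret K: kernel r n C by unfold_locales (rule C)
  interpret W: vec_space "TYPE(real)" N .
  have lm: "linear_map class_ring K.VK W.V ((*\<^sub>v) P)"
  proof (unfold_locales)
    show "(*\<^sub>v) P \<in> module_hom class_ring K.VK W.V"
      unfolding module_hom_def using P mat_kernel_carrier[OF C]
      by (auto simp: module_vec_simps mult_mat_vec[OF P] intro!: mult_add_distrib_mat_vec[OF P] dest: subsetD)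
  qed
  interpret L: linear_map class_ring K.VK W.V "(*\<^sub>v) P" by (rule lm)
  have imsub: "subspace class_ring L.imT W.V" by (rule L.imT_is_subspace)
  have vsim: "vectorspace class_ring (W.vs L.imT)" using W.subspace_is_vs[OF imsub] .
  have lm2: "linear_map class_ring K.VK (W.vs L.imT) ((*\<^sub>v) P)"
  proof (intro linear_map.intro)
    show "vectorspace class_ring K.VK" by unfold_locales
    show "vectorspace class_ring (W.vs L.imT)" by (rule vsim)
    show "mod_hom class_ring K.VK (W.vs L.imT) ((*\<^sub>v) P)"
    proof (intro mod_hom.intro mod_hom_axioms.intro)
      show "module class_ring K.VK" by unfold_locales
      show "module class_ring (W.vs L.imT)" using vsim by (simp add: vectorspace_def)
      show "(*\<^sub>v) P \<in> module_hom class_ring K.VK (W.vs L.imT)"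
        unfolding module_hom_def using P mat_kernel_carrier[OF C]
        by (auto simp: module_vec_simps mult_mat_vec[OF P] L.im_def 
            intro!: mult_add_distrib_mat_vec[OF P] dest: subsetD)
    qed
  qed
  have fdK: "K.Ker.fin_dim"
  proof -
    obtain B where "finite B" "kernel.basis n C B" using kernel_basis_exists[OF C] by blast
    thus ?thesis unfolding K.Ker.fin_dim_def K.Ker.basis_def by blast
  qed
  have fdim: "vectorspace.fin_dim class_ring (W.vs L.imT)"
    by (rule linear_map.rank_nullity_main(2)[OF lm2 fdK]) (auto simp: L.im_def)
  have inj: "inj_on ((*\<^sub>v) P) (carrier K.VK)"
  proof (rule inj_onI)
    fix x y assume x: "x \<in> carrier K.VK" and y: "y \<in> carrier K.VK" and eq: "P *\<^sub>v x = P *\<^sub>v y"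
    have xc: "x \<in> carrier_vec n" and yc: "y \<in> carrier_vec n" using x y mat_kernel_carrier[OF C] by auto
    have Cx: "C *\<^sub>v x = 0\<^sub>v r" and Cy: "C *\<^sub>v y = 0\<^sub>v r" using x y mat_kernelD[OF C] by auto
    have "C *\<^sub>v (x - y) = C *\<^sub>v x - C *\<^sub>v y" using C xc yc by (simp add: mult_minus_distrib_mat_vec)
    hence c1: "C *\<^sub>v (x - y) = 0\<^sub>v r" using Cx Cy by simp
    have "P *\<^sub>v (x - y) = P *\<^sub>v x - P *\<^sub>v y" using P xc yc by (simp add: mult_minus_distrib_mat_vec)
    hence Pz: "P *\<^sub>v (x - y) = 0\<^sub>v N" using eq P by auto
    have c2: "\<forall>p\<in>set ps. p \<bullet> (x - y) = 0"
    proof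
      fix p assume "p \<in> set ps"
      then obtain i where i: "i < N" "p = ps ! i" unfolding N_def by (metis in_set_conv_nth)
      have "(P *\<^sub>v (x - y)) $ i = row P i \<bullet> (x - y)" using i P by auto
      also have "row P i = p" unfolding P_def using i ps N_def
        by (metis mat_of_rows_row nth_mem subsetD)
      finally show "p \<bullet> (x - y) = 0" using Pz i by simp
    qed
    have z: "x - y = 0\<^sub>v n" using sep[OF _ c1 c2] xc yc by simp
    show "x = y"
    proof (rule eq_vecI)
      fix i assume i: "i < dim_vec y"
      have "(x - y) $ i = 0" using z i yc by simp
      thus "x $ i = y $ i" using xc yc i by simp
    qed (use xc yc in simp)
  qed
  have k0: "vectorspace.dim class_ring (K.Ker.vs L.kerT) = 0"
    by (rule L.inj_imp_dim_ker0[OF inj])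
  have imle: "vectorspace.dim class_ring (W.vs L.imT) \<le> N"
    using W.subspace_dim[OF imsub W.fin_dim fdim] W.dim_is_n by simp
  have "K.dim = vectorspace.dim class_ring (W.vs L.imT) + vectorspace.dim class_ring (K.Ker.vs L.kerT)"
    using L.rank_nullity[OF fdK] by simp
  hence "K.dim \<le> N" using k0 imle by simp
  thus ?thesis unfolding N_def using K.kernel_dim by simp
qed



lemma mult_mat_vec_sum: assumes "A \<in> carrier_mat n n" "v \<in> carrier_vec n" "i < n"
  shows "(A *\<^sub>v v) $ i = (\<Sum>j<n. A $$ (i,j) * v $ j)"
  using assms by (auto simp: scalar_prod_def lessThan_atLeast0 intro!: sum.cong)

lemma real_eig_sym:
  fixes M :: "real mat"
  assumes M: "M \<in> carrier_mat n n" and sym: "\<And>i j. i < n \<Longrightarrow> j < n \<Longrightarrow> M $$ (i,j) = M $$ (j,i)"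
  and ev: "eigenvalue (map_mat complex_of_real M) a"
  shows "Im a = 0"
proof -
  let ?Mc = "map_mat complex_of_real M"
  have Mc: "?Mc \<in> carrier_mat n n" using M by simp
  from ev obtain v where v: "eigenvector ?Mc v a" unfolding eigenvalue_def by blast
  hence vc: "v \<in> carrier_vec n" and v0: "v \<noteq> 0\<^sub>v n" and Mv: "?Mc *\<^sub>v v = a \<cdot>\<^sub>v v"
    unfolding eigenvector_def using M by auto
  define s where "s = (\<Sum>i<n. cnj (v $ i) * (\<Sum>j<n. complex_of_real (M $$ (i,j)) * v $ j))"
  define t where "t = (\<Sum>i<n. (cmod (v $ i))^2)"
  have "s = (\<Sum>i<n. cnj (v $ i) * (?Mc *\<^sub>v v) $ i)"
    unfolding s_def using mult_mat_vec_sum[OF Mc vc] M by (auto intro!: sum.cong)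
  also have "\<dots> = (\<Sum>i<n. cnj (v $ i) * (a * v $ i))" using Mv vc by (auto intro!: sum.cong)
  also have "\<dots> = a * complex_of_real t" unfolding t_def
    unfolding of_real_sum sum_distrib_left 
    by (rule sum.cong) (auto simp: complex_norm_square[symmetric] mult.commute)
  finally have s: "s = a * complex_of_real t" .
  have "cnj s = (\<Sum>i<n. v $ i * (\<Sum>j<n. complex_of_real (M $$ (i,j)) * cnj (v $ j)))"
    unfolding s_def by (simp add: cnj_sum)
  also have "\<dots> = (\<Sum>i<n. \<Sum>j<n. v $ i * complex_of_real (M $$ (i,j)) * cnj (v $ j))"
    by (simp add: sum_distrib_left mult.assoc)
  also have "\<dots> = (\<Sum>j<n. \<Sum>i<n. v $ i * complex_of_real (M $$ (i,j)) * cnj (v $ j))"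
    by (rule sum.swap)
  also have "\<dots> = s" unfolding s_def
    by (auto simp: sum_distrib_left sym mult.commute mult.left_commute intro!: sum.cong)
  finally have cs: "cnj s = s" .
  have "t > 0"
  proof -
    obtain i where i: "i < n" "v $ i \<noteq> 0" using v0 vc by (metis eq_vecI carrier_vecD index_zero_vec)
    have "(cmod (v $ i))^2 > 0" using i by simp
    moreover have "(cmod (v $ i))^2 \<le> t" unfolding t_def
      by (rule member_le_sum) (use i in auto)
    ultimately show ?thesis by linarith
  qed
  have "Im s = 0" using arg_cong[OF cs, of Im] by simp
  hence "Im a * t = 0" using s by simp
  thus ?thesis using \<open>t > 0\<close> by simp
qed

interpretation of_real_poly_hom: map_poly_inj_idom_hom "of_real :: real \<Rightarrow> complex" ..

lemma real_sym_split:
  fixes M :: "real mat"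
  assumes M: "M \<in> carrier_mat n n" and sym: "\<And>i j. i < n \<Longrightarrow> j < n \<Longrightarrow> M $$ (i,j) = M $$ (j,i)"
  shows "\<exists>as. char_poly M = (\<Prod>a\<leftarrow>as. [:- a, 1:])"
proof -
  let ?Mc = "map_mat complex_of_real M"
  have Mc: "?Mc \<in> carrier_mat n n" using M by simp
  obtain cs where cp: "char_poly ?Mc = (\<Prod>c\<leftarrow>cs. [:- c, 1:])"
    using char_poly_factorized[OF Mc] by blast
  have re: "\<And>c. c \<in> set cs \<Longrightarrow> complex_of_real (Re c) = c"
  proof -
    fix c assume c: "c \<in> set cs"
    have "poly (char_poly ?Mc) c = 0" unfolding cp by (rule linear_poly_root[OF c])
    hence "eigenvalue ?Mc c" using eigenvalue_root_char_poly[OF Mc] by simp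
    from real_eig_sym[OF M sym this] show "complex_of_real (Re c) = c" by (simp add: complex_eq_iff)
  qed
  have prod: "map_poly complex_of_real (\<Prod>a\<leftarrow>map Re cs. [:- a, 1:]) = (\<Prod>c\<leftarrow>cs. [:- c, 1:])"
    using re
  proof (induct cs)
    case (Cons a cs)
    have a: "map_poly complex_of_real [:- Re a, 1:] = [:- a, 1:]" using Cons(2)[of a] by simp
    have IH: "map_poly complex_of_real (\<Prod>a\<leftarrow>map Re cs. [:- a, 1:]) = (\<Prod>c\<leftarrow>cs. [:- c, 1:])"
      using Cons by simp
    show ?case unfolding list.map prod_list.Cons of_real_poly_hom.hom_mult a IH ..
  qed simp
  have "map_poly complex_of_real (char_poly M) = char_poly ?Mc"
    by (rule of_real_hom.char_poly_hom[OF M, symmetric])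
  also have "\<dots> = map_poly complex_of_real (\<Prod>a\<leftarrow>map Re cs. [:- a, 1:])" unfolding cp prod ..
  finally have "char_poly M = (\<Prod>a\<leftarrow>map Re cs. [:- a, 1:])" by simp
  thus ?thesis by blast
qed

lemma kernel_dim_cong: assumes "dim_col A = dim_col B" "mat_kernel A = mat_kernel B"
  shows "kernel_dim A = kernel_dim B"
  unfolding kernel_dim_def using assms by simp

lemma sym_Cy0:
  fixes C :: "real mat"
  assumes C: "C \<in> carrier_mat n n" and sym: "\<And>i j. i < n \<Longrightarrow> j < n \<Longrightarrow> C $$ (i,j) = C $$ (j,i)"
  and x: "x \<in> carrier_vec n" and C2: "C *\<^sub>v (C *\<^sub>v x) = 0\<^sub>v n"
  shows "C *\<^sub>v x = 0\<^sub>v n"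
proof -
  define y where "y = C *\<^sub>v x"
  have y: "y \<in> carrier_vec n" unfolding y_def using C x by simp
  have "(\<Sum>i<n. y $ i * y $ i) = (\<Sum>i<n. (\<Sum>j<n. C $$ (i,j) * x $ j) * y $ i)"
    unfolding y_def using mult_mat_vec_sum[OF C x] by (auto intro!: sum.cong)
  also have "\<dots> = (\<Sum>i<n. \<Sum>j<n. C $$ (i,j) * x $ j * y $ i)" by (simp add: sum_distrib_right)
  also have "\<dots> = (\<Sum>j<n. \<Sum>i<n. C $$ (i,j) * x $ j * y $ i)" by (rule sum.swap)
  also have "\<dots> = (\<Sum>j<n. x $ j * (\<Sum>i<n. C $$ (j,i) * y $ i))"
    by (auto simp: sum_distrib_left sym mult.commute mult.left_commute intro!: sum.cong)
  also have "\<dots> = (\<Sum>j<n. x $ j * (C *\<^sub>v y) $ j)" using mult_mat_vec_sum[OF C y] by simp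
  also have "\<dots> = 0" using C2 unfolding y_def by simp
  finally have ss: "(\<Sum>i<n. y $ i * y $ i) = 0" .
  have "\<forall>i\<in>{..<n}. y $ i * y $ i = 0"
    using ss by (subst sum_nonneg_eq_0_iff[symmetric]) auto
  hence "\<And>i. i < n \<Longrightarrow> y $ i = 0" by simp
  thus ?thesis unfolding y_def[symmetric] using y by (intro eq_vecI) auto
qed

lemma list_min12: assumes "\<forall>f\<in>set fs. f \<noteq> (0::nat)" 
  and "(\<Sum>n\<leftarrow>fs. min 2 n) = (\<Sum>n\<leftarrow>fs. min 1 n)"
  shows "sum_list fs = (\<Sum>n\<leftarrow>fs. min 1 n)"
  using assms
proof (induct fs)
  case (Cons f fs)
  have le: "(\<Sum>n\<leftarrow>fs. min 1 n) \<le> (\<Sum>n\<leftarrow>fs. min (2::nat) n)"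
    by (rule sum_list_mono) simp
  from Cons.prems have "min 2 f + (\<Sum>n\<leftarrow>fs. min 2 n) = min 1 f + (\<Sum>n\<leftarrow>fs. min 1 n)" by simp
  with le have f: "min 2 f = min 1 f" and r: "(\<Sum>n\<leftarrow>fs. min 2 n) = (\<Sum>n\<leftarrow>fs. min 1 n)"
    by (auto simp: min_def split: if_splits)
  from f Cons.prems have "f = 1" by (auto simp: min_def split: if_splits)
  with Cons.hyps[OF _ r] Cons.prems show ?case by simp
qed simp

lemma sym_order_eq_kernel_dim:
  fixes M :: "real mat"
  assumes M: "M \<in> carrier_mat n n" and sym: "\<And>i j. i < n \<Longrightarrow> j < n \<Longrightarrow> M $$ (i,j) = M $$ (j,i)"
  shows "Polynomial.order lam (char_poly M) = kernel_dim (char_matrix M lam)"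
proof -
  obtain as where split: "char_poly M = (\<Prod>a\<leftarrow>as. [:- a, 1:])" using real_sym_split[OF M sym] by blast
  obtain n_as where jnf: "jordan_nf M n_as" using jordan_nf_exists[OF M split] by blast
  define fs where "fs = map fst [(n, e)\<leftarrow>n_as . e = lam]"
  have "map fst (filter (\<lambda> na. snd na = lam) n_as) = fs" unfolding fs_def by (induct n_as) auto
  hence ord: "Polynomial.order lam (char_poly M) = sum_list fs" using jordan_nf_order[OF jnf, of lam] by simp
  have d: "\<And>k. dim_gen_eigenspace M lam k = (\<Sum>n\<leftarrow>fs. min k n)"
    unfolding fs_def by (rule dim_gen_eigenspace[OF jnf])
  have pos: "\<forall>f\<in>set fs. f \<noteq> 0" using jnf unfolding jordan_nf_def fs_def by force
  define C where "C = char_matrix M lam"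
  have C: "C \<in> carrier_mat n n" unfolding C_def using M by (simp add: char_matrix_def)
  have symC: "\<And>i j. i < n \<Longrightarrow> j < n \<Longrightarrow> C $$ (i,j) = C $$ (j,i)"
    unfolding C_def char_matrix_def using M sym by auto
  have C1: "C ^\<^sub>m 1 = 1\<^sub>m n * C" using C by simp
  have C2: "C ^\<^sub>m 2 = (1\<^sub>m n * C) * C" using C by (simp add: numeral_2_eq_2)
  have k1: "mat_kernel (C ^\<^sub>m 1) = mat_kernel C"
    unfolding C1 using C by (auto simp: mat_kernel_def)
  have k2: "mat_kernel (C ^\<^sub>m 2) = mat_kernel C"
    unfolding C2 using C sym_Cy0[OF C symC] by (auto simp: mat_kernel_def)
  have "dim_gen_eigenspace M lam 2 = dim_gen_eigenspace M lam 1"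
    unfolding dim_gen_eigenspace_def C_def[symmetric]
    by (rule kernel_dim_cong) (use C k1 k2 in auto)
  hence "(\<Sum>n\<leftarrow>fs. min 2 n) = (\<Sum>n\<leftarrow>fs. min 1 n)" unfolding d .
  from list_min12[OF pos this] ord have "Polynomial.order lam (char_poly M) = dim_gen_eigenspace M lam 1"
    unfolding d by simp
  also have "\<dots> = kernel_dim C" unfolding dim_gen_eigenspace_def C_def[symmetric]
    by (rule kernel_dim_cong) (use C k1 in auto)
  finally show ?thesis unfolding C_def .
qed



lemma restrict_zero:
  fixes B :: "real mat"
  assumes B: "B \<in> carrier_mat k k"
  and basis: "kernel.basis k (char_matrix B lam) (set ws)"
  and y: "y \<in> carrier_vec k" and By: "char_matrix B lam *\<^sub>v y = 0\<^sub>v k"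
  and orth: "\<forall>w\<in>set ws. w \<bullet> y = 0"
  shows "y = 0\<^sub>v k"
proof -
  define Cb where "Cb = char_matrix B lam"
  have Cb: "Cb \<in> carrier_mat k k" unfolding Cb_def using B by (simp add: char_matrix_def)
  interpret K: kernel k k Cb by unfold_locales (rule Cb)
  have yk: "y \<in> mat_kernel Cb" using By y Cb unfolding Cb_def by (auto intro: mat_kernelI)
  have sub: "set ws \<subseteq> mat_kernel Cb" and gen: "K.span (set ws) = mat_kernel Cb"
    using basis unfolding Cb_def[symmetric] K.Ker.basis_def by auto
  obtain c where lc: "K.lincomb c (set ws) = y" using K.Ker.finite_in_span[OF _ sub, of y] yk gen by auto
  have wsc: "\<And>w. w \<in> set ws \<Longrightarrow> w \<in> carrier_vec k" using sub mat_kernel_carrier[OF Cb] by auto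
  have yi: "\<And>i. i < k \<Longrightarrow> y $ i = (\<Sum>w\<in>set ws. c w * w $ i)"
  proof -
    fix i assume i: "i < k"
    show "y $ i = (\<Sum>w\<in>set ws. c w * w $ i)" using K.lincomb_index[OF i sub, of c] lc by simp
  qed
  have "(\<Sum>i<k. y $ i * y $ i) = (\<Sum>i<k. y $ i * (\<Sum>w\<in>set ws. c w * w $ i))"
    using yi by simp
  also have "\<dots> = (\<Sum>w\<in>set ws. c w * (\<Sum>i<k. w $ i * y $ i))"
    unfolding sum_distrib_left
    by (subst sum.swap) (simp add: mult.commute mult.left_commute)
  also have "\<dots> = (\<Sum>w\<in>set ws. c w * (w \<bullet> y))"
    using wsc y by (auto simp: scalar_prod_def lessThan_atLeast0 intro!: sum.cong)
  also have "\<dots> = 0" using orth by simp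
  finally have ss: "(\<Sum>i<k. y $ i * y $ i) = 0" .
  have "\<forall>i\<in>{..<k}. y $ i * y $ i = 0"
    using ss by (subst sum_nonneg_eq_0_iff[symmetric]) auto
  hence "\<And>i. i < k \<Longrightarrow> y $ i = 0" by simp
  thus ?thesis using y by (intro eq_vecI) auto
qed



lemma char_matrix_carrier: "A \<in> carrier_mat n n \<Longrightarrow> char_matrix A e \<in> carrier_mat n n"
  by (auto simp: char_matrix_def)

lemma char_matrix_index: "A \<in> carrier_mat n n \<Longrightarrow> i < n \<Longrightarrow> j < n \<Longrightarrow> 
  char_matrix A e $$ (i,j) = A $$ (i,j) - (if i = j then e else 0)"
  by (auto simp: char_matrix_def)

lemma adj_carrier[simp]: "adj_mat n E \<in> carrier_mat n n" unfolding adj_mat_def by simp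
lemma adj_index: "i < n \<Longrightarrow> j < n \<Longrightarrow> adj_mat n E $$ (i,j) = (if E i j then 1 else 0)"
  unfolding adj_mat_def by simp

lemma char_adj_mult:
  assumes x: "x \<in> carrier_vec n" and v: "v < n"
  shows "(char_matrix (adj_mat n E) lam *\<^sub>v x) $ v = (\<Sum>u<n. if E v u then x $ u else 0) - lam * x $ v"
proof -
  have C: "char_matrix (adj_mat n E) lam \<in> carrier_mat n n" by (rule char_matrix_carrier) simp
  have "(char_matrix (adj_mat n E) lam *\<^sub>v x) $ v = (\<Sum>u<n. char_matrix (adj_mat n E) lam $$ (v,u) * x $ u)"
    by (rule mult_mat_vec_sum[OF C x v])
  also have "\<dots> = (\<Sum>u<n. (if E v u then x $ u else 0) - (if u = v then lam * x $ v else 0))"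
    using v by (intro sum.cong) (auto simp: char_matrix_index[OF adj_carrier] adj_index algebra_simps)
  also have "\<dots> = (\<Sum>u<n. if E v u then x $ u else 0) - lam * x $ v"
    using v by (simp add: sum_subtractf)
  finally show ?thesis .
qed

lemma induced_carrier[simp]: "finite S \<Longrightarrow> induced_adj_mat E S \<in> carrier_mat (card S) (card S)"
  unfolding induced_adj_mat_def Let_def by simp

lemma induced_index: "finite S \<Longrightarrow> i < card S \<Longrightarrow> j < card S \<Longrightarrow> 
  induced_adj_mat E S $$ (i,j) = (if E (sorted_list_of_set S ! i) (sorted_list_of_set S ! j) then 1 else 0)"
  unfolding induced_adj_mat_def Let_def by simp

lemma char_induced_mult:
  assumes S: "finite S" and y: "y \<in> carrier_vec (card S)" and i: "i < card S"
  shows "(char_matrix (induced_adj_mat E S) lam *\<^sub>v y) $ i = 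
    (\<Sum>i'<card S. if E (sorted_list_of_set S ! i) (sorted_list_of_set S ! i') then y $ i' else 0) - lam * y $ i"
proof -
  let ?k = "card S"
  have C: "char_matrix (induced_adj_mat E S) lam \<in> carrier_mat ?k ?k" using S by (intro char_matrix_carrier) simp
  have "(char_matrix (induced_adj_mat E S) lam *\<^sub>v y) $ i = (\<Sum>u<?k. char_matrix (induced_adj_mat E S) lam $$ (i,u) * y $ u)"
    by (rule mult_mat_vec_sum[OF C y i])
  also have "\<dots> = (\<Sum>u<?k. (if E (sorted_list_of_set S ! i) (sorted_list_of_set S ! u) then y $ u else 0) - (if u = i then lam * y $ i else 0))"
    using i S by (intro sum.cong) (auto simp: char_matrix_index[OF induced_carrier[OF S]] induced_index algebra_simps)
  also have "\<dots> = (\<Sum>u<?k. if E (sorted_list_of_set S ! i) (sorted_list_of_set S ! u) then y $ u else 0) - lam * y $ i"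
    using i by (simp add: sum_subtractf)
  finally show ?thesis .
qed

lemma sum_sorted: "finite S \<Longrightarrow> (\<Sum>i<card S. g (sorted_list_of_set S ! i)) = sum g S"
proof -
  assume S: "finite S"
  let ?s = "sorted_list_of_set S"
  have "sum g S = sum_list (map g ?s)"
    using sum_list_distinct_conv_sum_set[of ?s g] S by simp
  also have "\<dots> = (\<Sum>i<length ?s. map g ?s ! i)" by (simp add: sum_list_sum_nth atLeast0LessThan)
  also have "\<dots> = (\<Sum>i<card S. g (?s ! i))" using S by simp
  finally show ?thesis by simp
qed

lemma level_class_sub: "level_class n E eta j \<subseteq> {..<n}" unfolding level_class_def by auto
lemma level_class_fin[simp]: "finite (level_class n E eta j)" 
  using finite_subset[OF level_class_sub] by blast

lemma main_zero:
  fixes x :: "real vec"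
  assumes sym: "\<And>u v. u < n \<Longrightarrow> v < n \<Longrightarrow> E u v = E v u"
  and x: "x \<in> carrier_vec n"
  and eig: "\<And>v. v < n \<Longrightarrow> (\<Sum>u<n. if E v u then x $ u else 0) = lam * x $ v"
  and badz: "\<And>v. v < n \<Longrightarrow> bad n E eta v \<Longrightarrow> x $ v = 0"
  and levz: "\<And>j. (\<forall>i < card (level_class n E eta j). 
        (\<Sum>i'<card (level_class n E eta j). if E (sorted_list_of_set (level_class n E eta j) ! i) (sorted_list_of_set (level_class n E eta j) ! i') then x $ (sorted_list_of_set (level_class n E eta j) ! i') else 0)
        = lam * x $ (sorted_list_of_set (level_class n E eta j) ! i))
      \<Longrightarrow> \<forall>i < card (level_class n E eta j). x $ (sorted_list_of_set (level_class n E eta j) ! i) = 0"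
  shows "x = 0\<^sub>v n"
proof -
  define m where "m = (if n = 0 then 0 else Min (eta ` {..<n}))"
  have lower: "\<And>v. v < n \<Longrightarrow> m \<le> eta v" unfolding m_def by auto
  have all: "\<forall>v. v < n \<longrightarrow> x $ v = 0"
  proof (rule allI)
    fix v
    show "v < n \<longrightarrow> x $ v = 0"
    proof (induct v rule: measure_induct_rule[where f = "\<lambda>v. nat (eta v - m)"])
      case (less v)
      show ?case
      proof
        assume v: "v < n"
        have IH: "\<And>u. u < n \<Longrightarrow> eta u < eta v \<Longrightarrow> x $ u = 0"
        proof -
          fix u assume u: "u < n" "eta u < eta v"
          have "nat (eta u - m) < nat (eta v - m)" using lower[OF u(1)] u(2) by simp
          thus "x $ u = 0" using less u(1) by blast
        qed
        have prod0: "\<And>u. u < n \<Longrightarrow> eta u = eta v \<Longrightarrow> prodigy n E eta u \<Longrightarrow> x $ u = 0"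
        proof -
          fix u assume u: "u < n" "eta u = eta v" "prodigy n E eta u"
          then obtain w where w: "w < n" "E u w" "eta w < eta u" 
            "\<forall>u'<n. E w u' \<and> u' \<noteq> u \<longrightarrow> eta u' < eta u" unfolding prodigy_def by blast
          have "(\<Sum>u'<n. if E w u' then x $ u' else 0) = (\<Sum>u'<n. if u' = u then x $ u else 0)"
          proof (rule sum.cong)
            fix u' assume u': "u' \<in> {..<n}"
            show "(if E w u' then x $ u' else 0) = (if u' = u then x $ u else 0)"
            proof (cases "u' = u")
              case True thus ?thesis using sym[OF w(1) u(1)] w(2) by simp
            next
              case False thus ?thesis using w(4) u' u(2) IH by auto
            qed
          qed simp
          also have "\<dots> = x $ u" using u by simp
          finally have "x $ u = lam * x $ w" using eig[OF w(1)] by simp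
          thus "x $ u = 0" using IH[OF w(1)] w u by simp
        qed
        show "x $ v = 0"
        proof (cases "prodigy n E eta v")
          case True thus ?thesis using prod0 v by simp
        next
          case np: False
          show ?thesis
          proof (cases "level n E eta v")
            case False thus ?thesis using badz v np unfolding bad_def by simp
          next
            case lev: True
            define S where "S = level_class n E eta (eta v)"
            define s where "s = sorted_list_of_set S"
            define k where "k = card S"
            have Sfin: "finite S" unfolding S_def by simp
            have Ssub: "S \<subseteq> {..<n}" unfolding S_def by (rule level_class_sub)
            have setS: "set s = S" unfolding s_def using Sfin by simp
            have lens: "length s = k" unfolding s_def k_def by simp
            have eqs: "\<forall>i < k. (\<Sum>i'<k. if E (s ! i) (s ! i') then x $ (s ! i') else 0) = lam * x $ (s ! i)"
            proof (intro allI impI)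
              fix i assume i: "i < k"
              define v' where "v' = s ! i"
              have v'S: "v' \<in> S" unfolding v'_def using i lens setS nth_mem by blast
              hence v': "v' < n" "level n E eta v'" "eta v' = eta v" unfolding S_def level_class_def by auto
              have zero_out: "\<And>u. u < n \<Longrightarrow> u \<notin> S \<Longrightarrow> (if E v' u then x $ u else 0) = 0"
              proof -
                fix u assume u: "u < n" "u \<notin> S"
                show "(if E v' u then x $ u else 0) = 0"
                proof (cases "E v' u")
                  case True
                  hence le: "eta u \<le> eta v" using v' u unfolding level_def by auto
                  show ?thesis
                  proof (cases "eta u < eta v")
                    case True thus ?thesis using IH u by simp
                  next
                    case False
                    hence eq: "eta u = eta v" using le by simp
                    have "x $ u = 0"
                    proof (cases "prodigy n E eta u")
                      case True thus ?thesis using prod0 u eq by simp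
                    next
                      case False
                      have "\<not> level n E eta u" using u eq unfolding S_def level_class_def by auto
                      thus ?thesis using badz u False unfolding bad_def by simp
                    qed
                    thus ?thesis by simp
                  qed
                qed simp
              qed
              have "(\<Sum>i'<k. if E (s ! i) (s ! i') then x $ (s ! i') else 0) = 
                    (\<Sum>u\<in>S. if E v' u then x $ u else 0)"
                unfolding k_def s_def v'_def using sum_sorted[OF Sfin, of "\<lambda>u. if E (sorted_list_of_set S ! i) u then x $ u else 0"]
                by simp
              also have "\<dots> = (\<Sum>u<n. if E v' u then x $ u else 0)"
                by (rule sum.mono_neutral_left) (use Ssub zero_out in auto)
              also have "\<dots> = lam * x $ v'" by (rule eig[OF v'(1)])
              finally show "(\<Sum>i'<k. if E (s ! i) (s ! i') then x $ (s ! i') else 0) = lam * x $ (s ! i)"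
                unfolding v'_def .
            qed
            have z: "\<forall>i < k. x $ (s ! i) = 0"
              using levz[of "eta v"] eqs unfolding S_def[symmetric] s_def[symmetric] k_def[symmetric] by blast
            have "v \<in> S" unfolding S_def level_class_def using v lev by simp
            then obtain i where "i < k" "v = s ! i" using setS lens by (metis in_set_conv_nth)
            thus ?thesis using z by simp
          qed
        qed
      qed
    qed
  qed
  show ?thesis using all x by (intro eq_vecI) auto
qed

lemma part1:
  fixes n :: nat and E :: "nat \<Rightarrow> nat \<Rightarrow> bool" and eta :: "nat \<Rightarrow> int" and lam :: real
  assumes sym: "\<And>u v. u < n \<Longrightarrow> v < n \<Longrightarrow> E u v = E v u"
  shows "eig_mult (adj_mat n E) lam \<le> card {v. v < n \<and> bad n E eta v} + 
     (\<Sum>j \<in> eta ` {0..<n}. eig_mult (induced_adj_mat E (level_class n E eta j)) lam)"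
proof -
  define LS where "LS j = level_class n E eta j" for j
  define Bm where "Bm j = induced_adj_mat E (LS j)" for j
  define Cm where "Cm j = char_matrix (Bm j) lam" for j
  define sl where "sl j = sorted_list_of_set (LS j)" for j
  define wsf where "wsf j = (SOME ws. distinct ws \<and> kernel.basis (card (LS j)) (Cm j) (set ws))" for j
  define lift where "lift j w = vec n (\<lambda>u. \<Sum>i<card (LS j). if sl j ! i = u then w $ i else (0::real))" for j w
  define labs where "labs = sorted_list_of_set (eta ` {0..<n})"
  define ps where "ps = map (unit_vec n) (filter (bad n E eta) [0..<n]) @ concat (map (\<lambda>j. map (lift j) (wsf j)) labs)"
  define C where "C = char_matrix (adj_mat n E) lam"
  have Bm: "Bm j \<in> carrier_mat (card (LS j)) (card (LS j))" for j
    unfolding Bm_def LS_def by simp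
  have Cm: "Cm j \<in> carrier_mat (card (LS j)) (card (LS j))" for j
    unfolding Cm_def by (rule char_matrix_carrier[OF Bm])
  have sl_lt: "i < card (LS j) \<Longrightarrow> sl j ! i < n" for i j
  proof -
    assume i: "i < card (LS j)"
    have "sl j ! i \<in> set (sl j)" using i unfolding sl_def by simp
    hence "sl j ! i \<in> LS j" unfolding sl_def LS_def by simp
    thus ?thesis using level_class_sub unfolding LS_def by blast
  qed
  have symB: "\<And>i i'. i < card (LS j) \<Longrightarrow> i' < card (LS j) \<Longrightarrow> Bm j $$ (i,i') = Bm j $$ (i',i)" for j
    unfolding Bm_def using induced_index[of "LS j"] sym sl_lt unfolding sl_def LS_def by auto
  have wsf: "distinct (wsf j) \<and> kernel.basis (card (LS j)) (Cm j) (set (wsf j))" for j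
  proof -
    obtain W where W: "finite W" "kernel.basis (card (LS j)) (Cm j) W" using kernel_basis_exists[OF Cm] by blast
    then obtain ws where ws: "distinct ws" "set ws = W" using finite_distinct_list by metis
    have "distinct ws \<and> kernel.basis (card (LS j)) (Cm j) (set ws)" using ws W by simp
    thus ?thesis unfolding wsf_def by (rule someI)
  qed
  have lenws: "length (wsf j) = eig_mult (Bm j) lam" for j
  proof -
    interpret K: kernel "card (LS j)" "card (LS j)" "Cm j" by unfold_locales (rule Cm)
    have "K.dim = card (set (wsf j))" using K.Ker.dim_basis wsf by auto
    also have "\<dots> = length (wsf j)" using wsf distinct_card by blast
    finally have "kernel_dim (Cm j) = length (wsf j)" by simp
    moreover have "eig_mult (Bm j) lam = kernel_dim (Cm j)"
      unfolding eig_mult_def Cm_def by (rule sym_order_eq_kernel_dim[OF Bm symB])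
    ultimately show ?thesis by simp
  qed
  have eigA: "eig_mult (adj_mat n E) lam = kernel_dim C"
    unfolding eig_mult_def C_def by (rule sym_order_eq_kernel_dim[OF adj_carrier]) (use sym in \<open>simp add: adj_index\<close>)
  have lenps: "length ps = card {v. v < n \<and> bad n E eta v} + (\<Sum>j \<in> eta ` {0..<n}. eig_mult (Bm j) lam)"
  proof -
    have "length (filter (bad n E eta) [0..<n]) = card {v. v < n \<and> bad n E eta v}"
      by (simp add: length_filter_conv_card cong: conj_cong)
    moreover have "length (concat (map (\<lambda>j. map (lift j) (wsf j)) labs)) = (\<Sum>j \<in> eta ` {0..<n}. eig_mult (Bm j) lam)"
    proof -
      have "length (concat (map (\<lambda>j. map (lift j) (wsf j)) labs)) = sum_list (map (\<lambda>j. eig_mult (Bm j) lam) labs)"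
        by (simp add: length_concat o_def lenws)
      also have "\<dots> = (\<Sum>j \<in> eta ` {0..<n}. eig_mult (Bm j) lam)"
        unfolding labs_def by (subst sum_list_distinct_conv_sum_set) auto
      finally show ?thesis .
    qed
    ultimately show ?thesis unfolding ps_def by simp
  qed
  have psc: "set ps \<subseteq> carrier_vec n" unfolding ps_def lift_def by auto
  have sep: "x = 0\<^sub>v n" if x: "x \<in> carrier_vec n" and Cx: "C *\<^sub>v x = 0\<^sub>v n" 
    and orth: "\<forall>p\<in>set ps. p \<bullet> x = 0" for x
  proof (rule main_zero[OF sym x])
    fix v assume v: "v < n"
    have "(C *\<^sub>v x) $ v = 0" using Cx v by simp
    thus "(\<Sum>u<n. if E v u then x $ u else 0) = lam * x $ v"
      unfolding C_def char_adj_mult[OF x v] by simp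
  next
    fix v assume v: "v < n" and b: "bad n E eta v"
    have "unit_vec n v \<in> set ps" unfolding ps_def using v b by auto
    hence "unit_vec n v \<bullet> x = 0" using orth by blast
    thus "x $ v = 0" using scalar_prod_left_unit[OF x v] by simp
  next
    fix j
    let ?k = "card (level_class n E eta j)"
    let ?s = "sorted_list_of_set (level_class n E eta j)"
    assume eqs: "\<forall>i<?k. (\<Sum>i'<?k. if E (?s ! i) (?s ! i') then x $ (?s ! i') else 0) = lam * x $ (?s ! i)"
    show "\<forall>i<?k. x $ (?s ! i) = 0"
    proof (cases "LS j = {}")
      case True thus ?thesis unfolding LS_def by simp
    next
      case False
      then obtain v where "v \<in> LS j" by blast
      hence jl: "j \<in> set labs" unfolding labs_def LS_def level_class_def by auto
      define k where "k = card (LS j)"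
      define y where "y = vec k (\<lambda>i. x $ (sl j ! i))"
      have y: "y \<in> carrier_vec k" unfolding y_def by simp
      have Cy: "Cm j *\<^sub>v y = 0\<^sub>v k"
      proof (rule eq_vecI)
        fix i assume "i < dim_vec (0\<^sub>v k :: real vec)"
        hence i: "i < k" by simp
        have "(Cm j *\<^sub>v y) $ i = (\<Sum>i'<k. if E (sl j ! i) (sl j ! i') then y $ i' else 0) - lam * y $ i"
          unfolding Cm_def Bm_def k_def sl_def using char_induced_mult[of "LS j" y i E lam] y i
          unfolding LS_def k_def by simp
        also have "\<dots> = (\<Sum>i'<k. if E (sl j ! i) (sl j ! i') then x $ (sl j ! i') else 0) - lam * x $ (sl j ! i)"
          using i unfolding y_def by (auto intro!: sum.cong)
        also have "\<dots> = 0" using eqs i unfolding k_def sl_def LS_def by simp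
        finally show "(Cm j *\<^sub>v y) $ i = 0\<^sub>v k $ i" using i by simp
      qed (use Cm[of j] in \<open>simp add: k_def\<close>)
      have orthy: "\<forall>w\<in>set (wsf j). w \<bullet> y = 0"
      proof
        fix w assume w: "w \<in> set (wsf j)"
        have wc: "w \<in> carrier_vec k"
        proof -
          interpret K: kernel "card (LS j)" "card (LS j)" "Cm j" by unfold_locales (rule Cm)
          have "set (wsf j) \<subseteq> mat_kernel (Cm j)" using wsf[of j] unfolding K.Ker.basis_def by auto
          thus ?thesis using w mat_kernel_carrier[OF Cm] unfolding k_def by auto
        qed
        have "lift j w \<in> set ps" unfolding ps_def using jl w by auto
        hence "lift j w \<bullet> x = 0" using orth by blast
        moreover have "lift j w \<bullet> x = w \<bullet> y"
        proof -
          have "lift j w \<bullet> x = (\<Sum>u<n. (\<Sum>i<k. if sl j ! i = u then w $ i else 0) * x $ u)"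
            unfolding lift_def scalar_prod_def k_def using x by (auto simp: lessThan_atLeast0)
          also have "\<dots> = (\<Sum>u<n. \<Sum>i<k. if sl j ! i = u then w $ i * x $ u else 0)"
            unfolding sum_distrib_right by (intro sum.cong) auto
          also have "\<dots> = (\<Sum>i<k. \<Sum>u<n. if sl j ! i = u then w $ i * x $ u else 0)"
            by (rule sum.swap)
          also have "\<dots> = (\<Sum>i<k. w $ i * x $ (sl j ! i))"
            using sl_lt unfolding k_def by (intro sum.cong) auto
          also have "\<dots> = w \<bullet> y" unfolding y_def scalar_prod_def using wc by (auto simp: lessThan_atLeast0)
          finally show ?thesis .
        qed
        ultimately show "w \<bullet> y = 0" by simp
      qed
      have "y = 0\<^sub>v (card (LS j))"
        by (rule restrict_zero[OF Bm[of j], of lam "wsf j"]) (use wsf[of j] Cy orthy y in \<open>auto simp: Cm_def k_def\<close>)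
      hence "\<forall>i<k. x $ (sl j ! i) = 0" unfolding y_def k_def by (metis index_vec index_zero_vec(1))
      thus ?thesis unfolding k_def sl_def LS_def .
    qed
  qed
  have "kernel_dim C \<le> length ps"
    by (rule DL[OF _ psc]) (use sep in \<open>auto simp: C_def intro: char_matrix_carrier\<close>)
  thus ?thesis using eigA lenps unfolding Bm_def LS_def by simp
qed

lemma sum_order_le:
  fixes p :: "real poly"
  assumes p: "p \<noteq> 0" and X: "finite X"
  shows "(\<Sum>a\<in>X. Polynomial.order a p) \<le> degree p"
proof -
  define R where "R = {a. poly p a = 0}"
  have R: "finite R" unfolding R_def using poly_roots_finite[OF p] .
  have "(\<Sum>a\<in>X. Polynomial.order a p) = (\<Sum>a\<in>X \<inter> R. Polynomial.order a p)"
    by (rule sum.mono_neutral_right) (use X p in \<open>auto simp: R_def order_root\<close>)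
  also have "\<dots> \<le> (\<Sum>a\<in>R. Polynomial.order a p)" by (rule sum_mono2[OF R]) auto
  also have "\<dots> \<le> degree p" unfolding R_def by (rule order_sum_degree[OF p])
  finally show ?thesis .
qed

lemma eig_sum_le: assumes "finite X" "finite S"
  shows "(\<Sum>mu\<in>X. eig_mult (induced_adj_mat E S) mu) \<le> card S"
proof -
  have B: "induced_adj_mat E S \<in> carrier_mat (card S) (card S)" using assms by simp
  have m: "monic (char_poly (induced_adj_mat E S))" and d: "degree (char_poly (induced_adj_mat E S)) = card S"
    using degree_monic_char_poly[OF B] by auto
  have "char_poly (induced_adj_mat E S) \<noteq> 0" using m by auto
  from sum_order_le[OF this assms(1)] d show ?thesis unfolding eig_mult_def by simp
qed

lemma level_sum: "(\<Sum>j \<in> eta ` {0..<n}. card (level_class n E eta j)) = card {v. v < n \<and> level n E eta v}"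
proof -
  have "{v. v < n \<and> level n E eta v} = (\<Union>j \<in> eta ` {0..<n}. level_class n E eta j)"
    unfolding level_class_def by auto
  moreover have "card (\<Union>j \<in> eta ` {0..<n}. level_class n E eta j) = (\<Sum>j \<in> eta ` {0..<n}. card (level_class n E eta j))"
    by (rule card_UN_disjoint) (auto simp: level_class_def)
  ultimately show ?thesis by simp
qed

theorem theorem2p1:
  fixes n :: nat and E :: "nat \<Rightarrow> nat \<Rightarrow> bool" and eta :: "nat \<Rightarrow> int"
    and lam :: real and Lams :: "real set"
  assumes sym: "\<And>u v. u < n \<Longrightarrow> v < n \<Longrightarrow> E u v = E v u"
    and irrefl: "\<And>v. v < n \<Longrightarrow> \<not> E v v"
  defines "A \<equiv> adj_mat n E"
    and "b \<equiv> card {v. v < n \<and> bad n E eta v}"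
    and "l \<equiv> card {v. v < n \<and> level n E eta v}"
  shows "eig_mult A lam \<le> b + (\<Sum>j \<in> eta ` {0..<n}. eig_mult (induced_adj_mat E (level_class n E eta j)) lam)
     \<and> (finite Lams \<and> (\<forall>\<mu>\<in>Lams. eigenvalue A \<mu>) \<longrightarrow>
         (\<Sum>\<mu>\<in>Lams. eig_mult A \<mu>) \<le> card Lams * b + l)"
proof -
  have p1: "eig_mult A mu \<le> b + (\<Sum>j \<in> eta ` {0..<n}. eig_mult (induced_adj_mat E (level_class n E eta j)) mu)" for mu
    unfolding A_def b_def by (rule part1[OF sym])
  have p2: "(\<Sum>\<mu>\<in>Lams. eig_mult A \<mu>) \<le> card Lams * b + l" if fin: "finite Lams"
  proof -
    have "(\<Sum>\<mu>\<in>Lams. eig_mult A \<mu>) \<le> (\<Sum>\<mu>\<in>Lams. b + (\<Sum>j \<in> eta ` {0..<n}. eig_mult (induced_adj_mat E (level_class n E eta j)) \<mu>))"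
      by (rule sum_mono) (rule p1)
    also have "\<dots> = card Lams * b + (\<Sum>j \<in> eta ` {0..<n}. \<Sum>\<mu>\<in>Lams. eig_mult (induced_adj_mat E (level_class n E eta j)) \<mu>)"
      by (simp add: sum.distrib sum.swap[of _ Lams])
    also have "\<dots> \<le> card Lams * b + (\<Sum>j \<in> eta ` {0..<n}. card (level_class n E eta j))"
      by (intro add_left_mono sum_mono eig_sum_le[OF fin]) simp
    also have "\<dots> = card Lams * b + l" unfolding l_def level_sum ..
    finally show ?thesis .
  qed
  show ?thesis using p1 p2 by blast
qed


end
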